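(* Let $k\ge1$ and $\mathcal{H}\subset\mathbb{Z}^k\setminus\{\mathbf{0}\}$. Then $\gamma(\mathcal{H})\le\delta(\mathcal{H})$.
   Context: $\lVert x\rVert$ denotes the distance from $x\in\mathbb{R}$ to the nearest integer and $\cdot$ the standard inner product. Let $\mathcal{T}(\mathcal{H})$ be the set of real trigonometric polynomials $T(\mathbf{x})=a_0+\sum_{\mathbf{h}\in\mathcal{H}}a_{\mathbf{h}}\cos(2\pi\mathbf{h}\cdot\mathbf{x})$ (finitely many nonzero real $a_{\mathbf{h}}$) with $T(\mathbf{x})\ge0$ for all $\mathbf{x}\in\mathbb{R}^k$ and $T(\mathbf{0})=1$. Define $\delta(\mathcal{H})=\inf_{T\in\mathcal{T}(\mathcal{H})}a_0$ and $\gamma(\mathcal{H})=\sup_{\xi\in\mathbb{R}^k}\inf_{\mathbf{h}\in\mathcal{H}}\lVert\mathbf{h}\cdot\xi\rVert$. *)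

theory Defs
  imports "HOL-Analysis.Analysis"
begin

definition dist_nearest_int :: "real \<Rightarrow> real" where
  "dist_nearest_int x = infdist x (\<int>::real set)"

definition ivec :: "int ^ 'k \<Rightarrow> real ^ 'k" where
  "ivec h = (\<chi> i. real_of_int (h $ i))"

definition trig_eval :: "(int ^ 'k) set \<Rightarrow> real \<Rightarrow> (int ^ 'k \<Rightarrow> real) \<Rightarrow> real ^ 'k \<Rightarrow> real" where
  "trig_eval H a0 a x =
     a0 + (\<Sum>h\<in>{h\<in>H. a h \<noteq> 0}. a h * cos (2 * pi * (ivec h \<bullet> x)))"

definition in_TH :: "(int ^ 'k) set \<Rightarrow> real \<Rightarrow> (int ^ 'k \<Rightarrow> real) \<Rightarrow> bool" where
  "in_TH H a0 a \<longleftrightarrow>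
     finite {h\<in>H. a h \<noteq> 0} \<and>
     (\<forall>x. trig_eval H a0 a x \<ge> 0) \<and>
     trig_eval H a0 a 0 = 1"

definition delta_H :: "(int ^ 'k) set \<Rightarrow> real" where
  "delta_H H = Inf {a0. \<exists>a. in_TH H a0 a}"

definition gamma_H :: "(int ^ 'k) set \<Rightarrow> real" where
  "gamma_H H = (SUP \<xi>::real ^ 'k. INF h\<in>H. dist_nearest_int (ivec h \<bullet> \<xi>))"

end

theory Submission
  imports Defs
begin


lemma geo_cis:
  assumes N: "N > 0"
  shows "(\<Sum>n<N. cis (2*pi* real n* of_int d/real N)) = (if int N dvd d then of_nat N else 0)"
proof -
  define z where "z = cis (2*pi* of_int d/real N)"
  have zn: "cis (2*pi* real n* of_int d/real N) = z ^ n" for n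
    unfolding z_def Complex.DeMoivre by (simp add: mult_ac)
  show ?thesis
  proof (cases "int N dvd d")
    case True
    then obtain q where q: "d = int N * q" by blast
    have "z = 1"
    proof -
      have "2*pi* of_int d/real N = 2*pi* of_int q" unfolding q using N by simp
      then show ?thesis unfolding z_def by (metis Ints_of_int cis_multiple_2pi)
    qed
    then show ?thesis using True by (simp add: zn)
  next
    case False
    have "z \<noteq> 1"
    proof
      assume "z = 1"
      then have "cos (2*pi* of_int d/real N) = 1" unfolding z_def
        by (metis Re_complex_of_real cis.sel(1) one_complex.sel(1))
      then obtain n::int where "2*pi* of_int d/real N = real_of_int n * 2 * pi" using cos_one_2pi_int by blast
      then have "of_int d = real N * n" using N by (simp add: field_simps)
      then have "d = int N * n" by (metis of_int_eq_iff of_int_mult of_int_of_nat_eq)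
      then show False using False by auto
    qed
    moreover have "z ^ N = 1"
    proof -
      have "real N * (2*pi* of_int d/real N) = 2*pi* of_int d" using N by simp
      then show ?thesis unfolding z_def Complex.DeMoivre by simp
    qed
    ultimately show ?thesis using False by (simp add: zn sum_gp_strict)
  qed
qed


definition EE :: "nat \<Rightarrow> int \<Rightarrow> nat \<Rightarrow> complex" where
  "EE N d n = cis (2*pi* real n * of_int d / real N)"

lemma EE_mult: "EE N a n * EE N b n = EE N (a+b) n"
  unfolding EE_def cis_mult by (simp add: add_divide_distrib distrib_left)

lemma EE_cnj: "cnj (EE N a n) = EE N (-a) n"
  unfolding EE_def cis_cnj by simp

lemma EE_0 [simp]: "EE N a 0 = 1"
  unfolding EE_def by simp

lemma cos_cis: "complex_of_real (cos x) = (cis x + cis (-x)) / 2"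
  by (simp add: complex_eq_iff cis.code)

lemma GG: "N > 0 \<Longrightarrow> (\<Sum>n<N. EE N d n) = (if int N dvd d then of_nat N else 0)"
  unfolding EE_def by (rule geo_cis)


lemma lemR:
  fixes S :: "'a set" and c :: "'a \<Rightarrow> real" and k :: "'a \<Rightarrow> int"
  assumes fin: "finite S" and N: "N > 0" and L1: "1 \<le> L" and LN: "L \<le> N"
    and nonneg: "\<And>n::nat. 0 \<le> a0 + (\<Sum>h\<in>S. c h * cos (2*pi* real n * of_int (k h) / real N))"
    and one: "a0 + (\<Sum>h\<in>S. c h) = 1"
    and gap: "\<And>h d. h \<in> S \<Longrightarrow> \<bar>d\<bar> < int L \<Longrightarrow> \<not> int N dvd (d + k h)"
  shows "real L / real N \<le> a0"
proof -
  define p where "p n = a0 + (\<Sum>h\<in>S. c h * cos (2*pi* real n * of_int (k h) / real N))" for n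
  define D where "D n = (\<Sum>j<L. EE N (int j) n)" for n
  define w where "w n = (cmod (D n))^2" for n
  have p0: "p 0 = 1" using one unfolding p_def by simp
  have D0: "D 0 = of_nat L" unfolding D_def by simp
  have lower: "real L ^ 2 \<le> (\<Sum>n<N. w n * p n)"
  proof -
    have "w 0 * p 0 \<le> (\<Sum>n<N. w n * p n)"
      using N by (intro member_le_sum) (auto simp: w_def p_def intro!: mult_nonneg_nonneg nonneg)
    then show ?thesis using p0 D0 unfolding w_def by simp
  qed
  define G where "G d = (\<Sum>n<N. EE N d n)" for d
  have wexp: "complex_of_real (w n) = (\<Sum>j<L. \<Sum>l<L. EE N (int j - int l) n)" for n
  proof -
    have "complex_of_real (w n) = D n * cnj (D n)" unfolding w_def by (rule complex_norm_square)
    also have "\<dots> = (\<Sum>j<L. \<Sum>l<L. EE N (int j) n * cnj (EE N (int l) n))"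
      unfolding D_def cnj_sum by (rule sum_product)
    also have "\<dots> = (\<Sum>j<L. \<Sum>l<L. EE N (int j - int l) n)"
      by (simp add: EE_cnj EE_mult)
    finally show ?thesis .
  qed
  have pexp: "complex_of_real (p n) = a0 + (\<Sum>h\<in>S. c h * (EE N (k h) n + EE N (- k h) n) / 2)" for n
    unfolding p_def EE_def by (simp add: cos_cis)
  have prod: "EE N d n * complex_of_real (p n) =
      a0 * EE N d n + (\<Sum>h\<in>S. c h / 2 * (EE N (d + k h) n + EE N (d - k h) n))" for d n
    unfolding pexp by (simp add: distrib_left sum_distrib_left EE_mult algebra_simps add_divide_distrib)
  have aux: "(\<Sum>i<N. x * (A i + B i)/2) = x * (sum A {..<N} + sum B {..<N}) / 2"
    for x :: complex and A B
    by (simp add: sum.distrib flip: sum_divide_distrib sum_distrib_left)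
  have "complex_of_real (\<Sum>n<N. w n * p n) = (\<Sum>n<N. \<Sum>j<L. \<Sum>l<L. EE N (int j - int l) n * complex_of_real (p n))"
    by (simp add: wexp sum_distrib_right)
  also have "\<dots> = (\<Sum>j<L. \<Sum>l<L. \<Sum>n<N. EE N (int j - int l) n * complex_of_real (p n))"
    by (subst sum.swap, rule sum.cong[OF refl], subst sum.swap, rule refl)
  also have "\<dots> = (\<Sum>j<L. \<Sum>l<L. a0 * G (int j - int l) +
       (\<Sum>h\<in>S. c h / 2 * (G (int j - int l + k h) + G (int j - int l - k h))))"
    unfolding prod G_def sum.distrib sum_distrib_left sum_distrib_right
    by (intro sum.cong refl arg_cong2[where f="(+)"], subst sum.swap, simp add: sum_distrib_left aux)
  also have "\<dots> = (\<Sum>j<L. \<Sum>l<L. a0 * G (int j - int l))"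
  proof -
    have "G (int j - int l + k h) = 0" "G (int j - int l - k h) = 0" if "j < L" "l < L" "h \<in> S" for j l h
    proof -
      have "\<not> int N dvd (int j - int l + k h)" using gap[OF that(3), of "int j - int l"] that by auto
      moreover have "\<not> int N dvd (int j - int l - k h)"
      proof
        assume "int N dvd (int j - int l - k h)"
        then have "int N dvd (int l - int j + k h)"
          by (metis dvd_minus_iff minus_diff_eq diff_diff_eq2 add.commute diff_minus_eq_add)
        then show False using gap[OF that(3), of "int l - int j"] that by auto
      qed
      ultimately show "G (int j - int l + k h) = 0" "G (int j - int l - k h) = 0"
        unfolding G_def using GG N by auto
    qed
    then show ?thesis by simp
  qed
  also have "\<dots> = (\<Sum>j<L. complex_of_real a0 * of_nat N)"
  proof (rule sum.cong[OF refl])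
    fix j assume j: "j \<in> {..<L}"
    have "G (int j - int l) = (if l = j then of_nat N else 0)" if "l < L" for l
    proof -
      have "int N dvd (int j - int l) \<longleftrightarrow> l = j"
      proof
        assume "int N dvd (int j - int l)"
        moreover have "\<bar>int j - int l\<bar> < int N" using j that LN by auto
        ultimately have "int j - int l = 0"
          using dvd_imp_le_int[of "int j - int l" "int N"] by (cases "int j - int l = 0") auto
        then show "l = j" by simp
      qed simp
      then show ?thesis unfolding G_def using GG N by simp
    qed
    then have "(\<Sum>l<L. a0 * G (int j - int l)) = (\<Sum>l<L. if l = j then complex_of_real a0 * of_nat N else 0)"
      by (intro sum.cong) auto
    also have "\<dots> = complex_of_real a0 * of_nat N" using j by simp
    finally show "(\<Sum>l<L. a0 * G (int j - int l)) = complex_of_real a0 * of_nat N" .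
  qed
  also have "\<dots> = complex_of_real (real L * a0 * real N)" by simp
  finally have "(\<Sum>n<N. w n * p n) = real L * a0 * real N" using of_real_eq_iff by blast
  with lower have "real L ^ 2 \<le> real L * a0 * real N" by simp
  then have "real L * real L \<le> real L * (a0 * real N)" by (simp add: power2_eq_square mult_ac)
  then have "real L \<le> a0 * real N" using L1 by (simp add: mult_le_cancel_left)
  then show ?thesis using N by (simp add: divide_le_eq)
qed


lemma ivec_inner_ivec: "ivec h \<bullet> (c *\<^sub>R ivec z) = c * of_int (\<Sum>i\<in>UNIV. h$i * z$i)"
  unfolding ivec_def inner_vec_def by (simp add: sum_distrib_left mult_ac)

lemma dni_nonneg: "0 \<le> dist_nearest_int x"
  unfolding dist_nearest_int_def by (rule infdist_nonneg)

lemma dni_le_int: "j \<in> \<int> \<Longrightarrow> dist_nearest_int x \<le> \<bar>x - j\<bar>"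
  unfolding dist_nearest_int_def using infdist_le[of j \<int> x] by (simp add: dist_real_def)

lemma dni_lt1: "dist_nearest_int x < 1"
proof -
  have "dist_nearest_int x \<le> \<bar>x - of_int (floor x)\<bar>" by (rule dni_le_int) simp
  also have "\<dots> < 1" by linarith
  finally show ?thesis .
qed

lemma dni_lip: "dist_nearest_int x \<le> dist_nearest_int y + \<bar>x - y\<bar>"
  unfolding dist_nearest_int_def using infdist_triangle[of x \<int> y] by (simp add: dist_real_def)

lemma dni_pos: "0 < \<bar>x\<bar> \<Longrightarrow> \<bar>x\<bar> < 1 \<Longrightarrow> 0 < dist_nearest_int x"
proof -
  assume a: "0 < \<bar>x\<bar>" "\<bar>x\<bar> < 1"
  have "x \<notin> \<int>"
  proof
    assume "x \<in> \<int>"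
    then obtain j where "x = of_int j" by (auto elim: Ints_cases)
    with a show False by auto
  qed
  then show ?thesis unfolding dist_nearest_int_def
    by (intro infdist_pos_not_in_closed) auto
qed

lemma approx_bound:
  fixes h z :: "int ^ 'k" and \<xi> :: "real ^ 'k"
  assumes N: "N > 0" and z: "\<And>i. z$i = floor (real N * \<xi>$i)"
  shows "\<bar>ivec h \<bullet> ((1/real N) *\<^sub>R ivec z) - ivec h \<bullet> \<xi>\<bar> \<le> (\<Sum>i\<in>UNIV. \<bar>real_of_int (h$i)\<bar>) / real N"
proof -
  have e: "\<bar>real_of_int (z$i) / real N - \<xi>$i\<bar> \<le> 1 / real N" for i
  proof -
    have "real_of_int (z$i) \<le> real N * \<xi>$i" "real N * \<xi>$i < real_of_int (z$i) + 1"
      unfolding z by linarith+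
    then have "\<bar>real_of_int (z$i) - real N * \<xi>$i\<bar> \<le> 1" by linarith
    then have "\<bar>(real_of_int (z$i) - real N * \<xi>$i) / real N\<bar> \<le> 1 / real N"
      using N by (simp add: divide_right_mono)
    moreover have "(real_of_int (z$i) - real N * \<xi>$i) / real N = real_of_int (z$i) / real N - \<xi>$i"
      using N by (simp add: field_simps)
    ultimately show ?thesis by simp
  qed
  have "ivec h \<bullet> ((1/real N) *\<^sub>R ivec z) - ivec h \<bullet> \<xi>
      = (\<Sum>i\<in>UNIV. real_of_int (h$i) * (real_of_int (z$i) / real N - \<xi>$i))"
    unfolding ivec_def inner_vec_def by (simp add: sum_subtractf[symmetric] algebra_simps)
  also have "\<bar>\<dots>\<bar> \<le> (\<Sum>i\<in>UNIV. \<bar>real_of_int (h$i)\<bar> * (1 / real N))"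
  proof (rule order_trans[OF sum_abs], rule sum_mono)
    fix i show "\<bar>real_of_int (h$i) * (real_of_int (z$i) / real N - \<xi>$i)\<bar> \<le> \<bar>real_of_int (h$i)\<bar> * (1 / real N)"
      unfolding abs_mult by (rule mult_left_mono[OF e]) simp
  qed
  also have "\<dots> = (\<Sum>i\<in>UNIV. \<bar>real_of_int (h$i)\<bar>) / real N"
    by (simp add: sum_divide_distrib)
  finally show ?thesis .
qed


lemma lemA:
  fixes S :: "(int ^ 'k) set" and a :: "int ^ 'k \<Rightarrow> real" and \<xi> :: "real ^ 'k"
  assumes fin: "finite S" and Sne: "S \<noteq> {}"
    and nonneg: "\<And>x. 0 \<le> a0 + (\<Sum>h\<in>S. a h * cos (2 * pi * (ivec h \<bullet> x)))"
    and one: "a0 + (\<Sum>h\<in>S. a h) = 1"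
    and m: "0 < m" "\<And>h. h \<in> S \<Longrightarrow> m \<le> dist_nearest_int (ivec h \<bullet> \<xi>)"
  shows "m \<le> a0"
proof -
  define Ch where "Ch h = (\<Sum>i\<in>UNIV. \<bar>real_of_int (h$i)\<bar>)" for h :: "int ^ 'k"
  define C where "C = (\<Sum>h\<in>S. Ch h)"
  have Ch0: "0 \<le> Ch h" for h unfolding Ch_def by (simp add: sum_nonneg)
  have ChC: "h \<in> S \<Longrightarrow> Ch h \<le> C" for h
    unfolding C_def using fin Ch0 by (intro member_le_sum) auto
  have C0: "0 \<le> C" unfolding C_def using Ch0 by (simp add: sum_nonneg)
  have m1: "m < 1" using Sne m(2) dni_lt1 by (meson ex_in_conv le_less_trans)
  show ?thesis
  proof (rule field_le_epsilon)
    fix \<epsilon> :: real assume \<epsilon>: "0 < \<epsilon>"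
    obtain N :: nat where Nb: "max ((C+1)/\<epsilon>) ((C+1)/m) < real N"
      using reals_Archimedean2 by blast
    have N1: "(C+1)/\<epsilon> < real N" "(C+1)/m < real N" using Nb by auto
    have Npos: "0 < real N" using N1(2) C0 m(1) by (smt (verit) divide_pos_pos)
    then have N: "N > 0" by simp
    have NC1: "C + 1 < real N * m" using N1(2) m(1) by (simp add: divide_less_eq mult.commute)
    have NCe: "(C + 1) / real N < \<epsilon>" using N1(1) \<epsilon> Npos by (simp add: divide_less_eq mult.commute)
    define z :: "int ^ 'k" where "z = (\<chi> i. floor (real N * \<xi>$i))"
    define \<xi>' where "\<xi>' = (1/real N) *\<^sub>R ivec z"
    define k where "k h = (\<Sum>i\<in>UNIV. h$i * z$i)" for h :: "int ^ 'k"
    have inner': "ivec h \<bullet> \<xi>' = of_int (k h) / real N" for h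
      unfolding \<xi>'_def k_def ivec_inner_ivec by simp
    have dk: "m - C / real N \<le> dist_nearest_int (of_int (k h) / real N)" if h: "h \<in> S" for h
    proof -
      have "\<bar>ivec h \<bullet> \<xi>' - ivec h \<bullet> \<xi>\<bar> \<le> Ch h / real N"
        unfolding \<xi>'_def Ch_def by (rule approx_bound[OF N]) (simp add: z_def)
      also have "\<dots> \<le> C / real N" using ChC[OF h] Npos by (simp add: divide_right_mono)
      finally have "\<bar>ivec h \<bullet> \<xi> - ivec h \<bullet> \<xi>'\<bar> \<le> C / real N" by simp
      moreover have "dist_nearest_int (ivec h \<bullet> \<xi>) \<le> dist_nearest_int (ivec h \<bullet> \<xi>') + \<bar>ivec h \<bullet> \<xi> - ivec h \<bullet> \<xi>'\<bar>"
        by (rule dni_lip)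
      ultimately show ?thesis using m(2)[OF h] unfolding inner'[symmetric] by linarith
    qed
    define L where "L = nat (floor (real N * m - C))"
    have L1: "1 \<le> L" using NC1 unfolding L_def by linarith
    have Lle: "real L \<le> real N * m - C" using NC1 unfolding L_def by linarith
    have Lgt: "real N * m - C - 1 < real L" unfolding L_def by linarith
    have LN: "L \<le> N"
    proof -
      have "real L \<le> real N" using Lle m1 C0 Npos
        by (smt (verit) mult_less_cancel_left1)
      then show ?thesis by simp
    qed
    have "real L / real N \<le> a0"
    proof (rule lemR[OF fin N L1 LN, of a0 a k])
      fix n :: nat
      have "ivec h \<bullet> (real n *\<^sub>R \<xi>') = real n * of_int (k h) / real N" for h
        using inner'[of h] by simp
      then show "0 \<le> a0 + (\<Sum>h\<in>S. a h * cos (2*pi* real n * of_int (k h) / real N))"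
        using nonneg[of "real n *\<^sub>R \<xi>'"] by (simp add: mult.assoc)
    next
      show "a0 + (\<Sum>h\<in>S. a h) = 1" by (rule one)
    next
      fix h d assume h: "h \<in> S" and d: "\<bar>d\<bar> < int L"
      show "\<not> int N dvd (d + k h)"
      proof
        assume "int N dvd (d + k h)"
        then obtain q where q: "d + k h = int N * q" by blast
        have "dist_nearest_int (of_int (k h) / real N) \<le> \<bar>of_int (k h) / real N - of_int q\<bar>"
          by (rule dni_le_int) simp
        also have "of_int (k h) / real N - of_int q = - of_int d / real N"
        proof -
          have "real_of_int (k h) = real N * of_int q - of_int d"
            using arg_cong[OF q, of real_of_int] by simp
          then have "real_of_int (k h) - real N * of_int q = - of_int d" by simp
          moreover have "of_int (k h) / real N - of_int q = (of_int (k h) - real N * of_int q) / real N"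
            using Npos by (simp add: diff_divide_distrib)
          ultimately show ?thesis by simp
        qed
        also have "\<bar>- of_int d / real N\<bar> = \<bar>of_int d\<bar> / real N" using Npos by simp
        also have "\<dots> \<le> (real L - 1) / real N"
          using d Npos by (intro divide_right_mono) linarith+
        finally have "dist_nearest_int (of_int (k h) / real N) \<le> (real L - 1) / real N" .
        moreover have "real L / real N \<le> m - C / real N"
          using Lle Npos by (simp add: field_simps)
        moreover have "(real L - 1) / real N < real L / real N"
          using Npos by (simp add: divide_strict_right_mono)
        ultimately show False using dk[OF h] by linarith
      qed
    qed
    moreover have "m - \<epsilon> < real L / real N"
    proof -
      have "m - (C + 1) / real N = (real N * m - C - 1) / real N"
        using Npos by (simp add: field_simps)
      also have "\<dots> < real L / real N"
        using Lgt Npos by (rule divide_strict_right_mono)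
      finally have "m - (C + 1) / real N < real L / real N" .
      then show ?thesis using NCe by linarith
    qed
    ultimately show "m \<le> a0 + \<epsilon>" by linarith
  qed
qed


lemma interior_hyps:
  fixes F :: "(real ^ 'k) set"
  assumes "finite F" "\<And>u. u \<in> F \<Longrightarrow> u \<noteq> 0"
  shows "interior (\<Union>u\<in>F. {x. u \<bullet> x = 0}) = {}"
  using assms
proof (induction F rule: finite_induct)
  case empty
  then show ?case by simp
next
  case (insert u F)
  have "interior ({x. u \<bullet> x = 0} \<union> (\<Union>u\<in>F. {x. u \<bullet> x = 0})) = interior {x. u \<bullet> x = 0}"
    by (rule interior_closed_Un_empty_interior[OF closed_hyperplane]) (use insert in auto)
  also have "\<dots> = {}" using insert by simp
  finally show ?case by simp
qed

lemma exists_v: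
  fixes F :: "(real ^ 'k) set"
  assumes "finite F" "\<And>u. u \<in> F \<Longrightarrow> u \<noteq> 0"
  shows "\<exists>v. \<forall>u\<in>F. u \<bullet> v \<noteq> 0"
proof (rule ccontr)
  assume "\<not> ?thesis"
  then have "(\<Union>u\<in>F. {x. u \<bullet> x = 0}) = UNIV" by auto
  then show False using interior_hyps[OF assms] by simp
qed

lemma a0_pos:
  fixes S :: "(int ^ 'k) set" and a :: "int ^ 'k \<Rightarrow> real"
  assumes fin: "finite S" and Sne: "S \<noteq> {}" and S0: "0 \<notin> S"
    and nonneg: "\<And>x. 0 \<le> a0 + (\<Sum>h\<in>S. a h * cos (2 * pi * (ivec h \<bullet> x)))"
    and one: "a0 + (\<Sum>h\<in>S. a h) = 1"
  shows "0 < a0"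
proof -
  have "ivec h \<noteq> 0" if "h \<in> S" for h
  proof
    assume "ivec h = 0"
    then have "h = 0" unfolding ivec_def by (simp add: vec_eq_iff)
    with that S0 show False by simp
  qed
  then have "\<exists>v. \<forall>u\<in>ivec ` S. u \<bullet> v \<noteq> 0"
    using fin by (intro exists_v) auto
  then obtain v where v: "\<And>h. h \<in> S \<Longrightarrow> ivec h \<bullet> v \<noteq> 0" by auto
  define t where "t = 1 / (1 + (\<Sum>h\<in>S. \<bar>ivec h \<bullet> v\<bar>))"
  have s0: "0 \<le> (\<Sum>h\<in>S. \<bar>ivec h \<bullet> v\<bar>)" by (simp add: sum_nonneg)
  have t0: "0 < t" unfolding t_def using s0 by (simp add: add_pos_nonneg)
  define f where "f h = dist_nearest_int (ivec h \<bullet> (t *\<^sub>R v))" for h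
  have fpos: "0 < f h" if h: "h \<in> S" for h
  proof -
    have le: "\<bar>ivec h \<bullet> v\<bar> \<le> (\<Sum>h\<in>S. \<bar>ivec h \<bullet> v\<bar>)"
      using fin h by (intro member_le_sum) auto
    have "\<bar>ivec h \<bullet> (t *\<^sub>R v)\<bar> = t * \<bar>ivec h \<bullet> v\<bar>" using t0 by (simp add: abs_mult)
    moreover have "0 < t * \<bar>ivec h \<bullet> v\<bar>" using t0 v[OF h] by simp
    moreover have "t * \<bar>ivec h \<bullet> v\<bar> < 1"
      unfolding t_def using le s0 by (simp add: divide_less_eq)
    ultimately show ?thesis unfolding f_def by (intro dni_pos) auto
  qed
  define m where "m = Min (f ` S)"
  have "m \<in> f ` S" unfolding m_def using fin Sne by simp
  then have m0: "0 < m" using fpos by auto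
  have "m \<le> a0"
    by (rule lemA[OF fin Sne nonneg one m0, of "t *\<^sub>R v"])
       (use fin in \<open>auto simp: m_def f_def\<close>)
  then show ?thesis using m0 by simp
qed


theorem proposition3p1:
  fixes H :: "(int ^ 'k) set"
  assumes "H \<noteq> {}"
    and "0 \<notin> H"
  shows "gamma_H H \<le> delta_H H"
proof -
  have ne: "{a0. \<exists>a. in_TH H a0 a} \<noteq> {}"
  proof -
    have "in_TH H 1 (\<lambda>_. 0)" unfolding in_TH_def trig_eval_def by simp
    then show ?thesis by blast
  qed
  show ?thesis unfolding gamma_H_def delta_H_def
  proof (rule cInf_greatest[OF ne])
    fix a0 assume "a0 \<in> {a0. \<exists>a. in_TH H a0 a}"
    then obtain a where a: "in_TH H a0 a" by blast
    define S where "S = {h\<in>H. a h \<noteq> 0}"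
    have fin: "finite S" using a unfolding in_TH_def S_def by simp
    have nonneg: "0 \<le> a0 + (\<Sum>h\<in>S. a h * cos (2 * pi * (ivec h \<bullet> x)))" for x
      using a unfolding in_TH_def trig_eval_def S_def by simp
    have one: "a0 + (\<Sum>h\<in>S. a h) = 1"
      using a unfolding in_TH_def trig_eval_def S_def by simp
    have SH: "S \<subseteq> H" unfolding S_def by auto
    have S0: "0 \<notin> S" using assms(2) SH by auto
    show "(SUP \<xi>. INF h\<in>H. dist_nearest_int (ivec h \<bullet> \<xi>)) \<le> a0"
    proof (rule cSUP_least)
      fix \<xi> :: "real ^ 'k"
      have bdd: "bdd_below ((\<lambda>h. dist_nearest_int (ivec h \<bullet> \<xi>)) ` H)"
        by (rule bdd_belowI[of _ 0]) (auto simp: dni_nonneg)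
      show "(INF h\<in>H. dist_nearest_int (ivec h \<bullet> \<xi>)) \<le> a0"
      proof (cases "S = {}")
        case True
        then have "a0 = 1" using one by simp
        obtain h0 where "h0 \<in> H" using assms(1) by blast
        then have "(INF h\<in>H. dist_nearest_int (ivec h \<bullet> \<xi>)) \<le> dist_nearest_int (ivec h0 \<bullet> \<xi>)"
          by (rule cINF_lower[OF bdd])
        also have "\<dots> < 1" by (rule dni_lt1)
        finally show ?thesis using \<open>a0 = 1\<close> by simp
      next
        case False
        have a0p: "0 < a0" by (rule a0_pos[OF fin False S0 nonneg one])
        define m where "m = Min ((\<lambda>h. dist_nearest_int (ivec h \<bullet> \<xi>)) ` S)"
        have "m \<in> (\<lambda>h. dist_nearest_int (ivec h \<bullet> \<xi>)) ` S" unfolding m_def using fin False by simp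
        then obtain h1 where h1: "h1 \<in> S" "m = dist_nearest_int (ivec h1 \<bullet> \<xi>)" by auto
        have "(INF h\<in>H. dist_nearest_int (ivec h \<bullet> \<xi>)) \<le> m"
          unfolding h1(2) using h1(1) SH by (intro cINF_lower[OF bdd]) auto
        moreover have "m \<le> a0"
        proof (cases "0 < m")
          case True
          show ?thesis
            by (rule lemA[OF fin False nonneg one True, of \<xi>]) (use fin in \<open>auto simp: m_def\<close>)
        next
          case False
          then show ?thesis using a0p by simp
        qed
        ultimately show ?thesis by linarith
      qed
    qed simp
  qed
qed

end
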